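(* Let $p_{Z|XY}$ be a randomized function (not necessarily in normal form). (1) If the characteristic bipartite graph of $p_{XY}$ is connected, then every secure protocol $\Pi(p_{XY},p_{Z|XY})$ satisfies $I(X,Y,Z;M_{12})=0$. (2) If $p_{XY}$ has full support and there is no partition $\mathcal X=\mathcal X_1\cup\mathcal X_2$ into disjoint nonempty sets such that the sets $\mathcal Z_k=\{z:\exists x\in\mathcal X_k,y\in\mathcal Y,\ p(z|x,y)>0\}$, $k=1,2$, are disjoint, then every secure protocol $\Pi(p_{XY},p_{Z|XY})$ satisfies $I(X,Y,Z;M_{31})=0$. (3) If $p_{XY}$ has full support and there is no partition $\mathcal Y=\mathcal Y_1\cup\mathcal Y_2$ into disjoint nonempty sets such that the sets $\mathcal Z_k=\{z:\exists x\in\mathcal X,y\in\mathcal Y_k,\ p(z|x,y)>0\}$, $k=1,2$, are disjoint, then every secure protocol $\Pi(p_{XY},p_{Z|XY})$ satisfies $I(X,Y,Z;M_{23})=0$.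
   Context: Setting: $\mathcal X,\mathcal Y,\mathcal Z$ finite sets; Alice (party 1) holds $X\in\mathcal X$, Bob (party 2) holds $Y\in\mathcal Y$, $(X,Y)\sim p_{XY}$; Charlie (party 3) has no input and outputs $Z\in\mathcal Z$; a randomized function is a conditional distribution $p_{Z|XY}$. In a protocol the parties, each with private randomness, exchange messages over multiple rounds on three pairwise private links, each message a codeword of a prefix-free code determined by previous messages on that link; the protocol terminates with probability 1 and may depend on $p_{XY}$. $M_{12},M_{23},M_{31}$ are the final transcripts on the Alice–Bob, Bob–Charlie, Charlie–Alice links. A secure protocol $\Pi(p_{XY},p_{Z|XY})$ satisfies correctness (on inputs $x,y$ Charlie's output has distribution $p_{Z|X=x,Y=y}$) and privacy (Markov chains $(M_{12},M_{31})-X-(Y,Z)$, $(M_{12},M_{23})-Y-(X,Z)$, $(M_{23},M_{31})-Z-(X,Y)$). The characteristic bipartite graph of $p_{XY}$ has vertex set $\mathcal X\cup\mathcal Y$ with $x,y$ adjacent iff $p_{XY}(x,y)>0$. *)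

theory Defs
  imports "HOL-Probability.Probability"
begin

type_synonym msg = "bool list"
text \<open>History of a link: one entry per round in which the link is live; an entry is the pair
  of messages sent in the two directions in that round.
  Link 12: (Alice to Bob, Bob to Alice); link 23: (Bob to Charlie, Charlie to Bob);
  link 31: (Charlie to Alice, Alice to Charlie).\<close>
type_synonym hist = "(msg \<times> msg) list"

text \<open>A protocol is given by behavioural (randomised) next-message strategies: each party's
  messages in the next round are drawn from a distribution that depends only on its own view
  (own input and the histories of its two links); this is equivalent to using private
  randomness.
  Each message on a link is required to be a codeword of a prefix-free code that is
  determined by the previous messages on that link.\<close>
record ('x, 'y, 'z) protocol =
  alice   :: "'x \<Rightarrow> hist \<Rightarrow> hist \<Rightarrow> (msg \<times> msg \<times> bool) pmf"
    \<comment> \<open>input x, h12, h31 \<mapsto> (message to Bob, message to Charlie, halt?)\<close>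
  bob     :: "'y \<Rightarrow> hist \<Rightarrow> hist \<Rightarrow> (msg \<times> msg \<times> bool) pmf"
    \<comment> \<open>input y, h12, h23 \<mapsto> (message to Alice, message to Charlie, halt?)\<close>
  charlie :: "hist \<Rightarrow> hist \<Rightarrow> (msg \<times> msg \<times> 'z option) pmf"
    \<comment> \<open>h23, h31 \<mapsto> (message to Bob, message to Alice, output z and halt / continue)\<close>
  code12 :: "hist \<Rightarrow> msg set"
  code21 :: "hist \<Rightarrow> msg set"
  code23 :: "hist \<Rightarrow> msg set"
  code32 :: "hist \<Rightarrow> msg set"
  code31 :: "hist \<Rightarrow> msg set"
  code13 :: "hist \<Rightarrow> msg set"

definition prefix_free :: "msg set \<Rightarrow> bool" where
  "prefix_free C \<longleftrightarrow> (\<forall>u\<in>C. \<forall>v\<in>C. (\<exists>w. v = u @ w) \<longrightarrow> u = v)"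

definition valid_protocol :: "('x, 'y, 'z, 'e) protocol_scheme \<Rightarrow> bool" where
  "valid_protocol P \<longleftrightarrow>
     (\<forall>h. prefix_free (code12 P h) \<and> prefix_free (code21 P h) \<and> prefix_free (code23 P h) \<and>
          prefix_free (code32 P h) \<and> prefix_free (code31 P h) \<and> prefix_free (code13 P h)) \<and>
     (\<forall>x h12 h31 m1 m2 d. (m1, m2, d) \<in> set_pmf (alice P x h12 h31) \<longrightarrow>
          m1 \<in> code12 P h12 \<and> m2 \<in> code13 P h31) \<and>
     (\<forall>y h12 h23 m1 m2 d. (m1, m2, d) \<in> set_pmf (bob P y h12 h23) \<longrightarrow>
          m1 \<in> code21 P h12 \<and> m2 \<in> code23 P h23) \<and>
     (\<forall>h23 h31 m1 m2 o'. (m1, m2, o') \<in> set_pmf (charlie P h23 h31) \<longrightarrow>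
          m1 \<in> code32 P h23 \<and> m2 \<in> code31 P h31)"

text \<open>Global state: (Alice halted, Bob halted, Charlie's output if halted, h12, h23, h31).\<close>
type_synonym 'z pstate = "bool \<times> bool \<times> 'z option \<times> hist \<times> hist \<times> hist"

definition terminated :: "'z pstate \<Rightarrow> bool" where
  "terminated s = (case s of (ad, bd, co, _) \<Rightarrow> ad \<and> bd \<and> co \<noteq> None)"

definition step :: "('x, 'y, 'z, 'e) protocol_scheme \<Rightarrow> 'x \<Rightarrow> 'y \<Rightarrow> 'z pstate \<Rightarrow> 'z pstate pmf" where
  "step P x y s = (case s of (ad, bd, co, h12, h23, h31) \<Rightarrow>
     if terminated s then return_pmf s else
     do {
       (a12, a13, ad') \<leftarrow> (if ad then return_pmf ([], [], True) else alice P x h12 h31);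
       (b21, b23, bd') \<leftarrow> (if bd then return_pmf ([], [], True) else bob P y h12 h23);
       (c32, c31, co') \<leftarrow> (if co \<noteq> None then return_pmf ([], [], co) else charlie P h23 h31);
       return_pmf (ad', bd', co',
         (if ad \<and> bd then h12 else h12 @ [(a12, b21)]),
         (if bd \<and> co \<noteq> None then h23 else h23 @ [(b23, c32)]),
         (if co \<noteq> None \<and> ad then h31 else h31 @ [(c31, a13)]))
     })"

primrec run :: "('x, 'y, 'z, 'e) protocol_scheme \<Rightarrow> 'x \<Rightarrow> 'y \<Rightarrow> nat \<Rightarrow> 'z pstate pmf" where
  "run P x y 0 = return_pmf (False, False, None, [], [], [])"
| "run P x y (Suc n) = run P x y n \<bind> step P x y"

definition outcome :: "'z pstate \<Rightarrow> 'z \<times> hist \<times> hist \<times> hist" where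
  "outcome s = (case s of (_, _, co, h12, h23, h31) \<Rightarrow> (the co, h12, h23, h31))"

definition protocol_dist ::
  "('x, 'y, 'z, 'e) protocol_scheme \<Rightarrow> 'x \<Rightarrow> 'y \<Rightarrow> ('z \<times> hist \<times> hist \<times> hist) pmf \<Rightarrow> bool" where
  "protocol_dist P x y D \<longleftrightarrow>
     ((\<lambda>n. measure_pmf.prob (run P x y n) {s. terminated s}) \<longlonglongrightarrow> 1) \<and>
     (\<forall>o'. (\<lambda>n. measure_pmf.prob (run P x y n) {s. terminated s \<and> outcome s = o'})
              \<longlonglongrightarrow> pmf D o')"

definition joint ::
  "('x \<times> 'y) pmf \<Rightarrow> ('x \<Rightarrow> 'y \<Rightarrow> ('z \<times> hist \<times> hist \<times> hist) pmf)
     \<Rightarrow> ('x \<times> 'y \<times> 'z \<times> hist \<times> hist \<times> hist) pmf" where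
  "joint pXY D = pXY \<bind> (\<lambda>(x, y). map_pmf (\<lambda>(z, m). (x, y, z, m)) (D x y))"

definition markov_chain :: "'a pmf \<Rightarrow> ('a \<Rightarrow> 'b) \<Rightarrow> ('a \<Rightarrow> 'c) \<Rightarrow> ('a \<Rightarrow> 'd) \<Rightarrow> bool" where
  "markov_chain J f g h \<longleftrightarrow>
     (\<forall>a b c. measure_pmf.prob J {w. f w = a \<and> g w = b \<and> h w = c} * measure_pmf.prob J {w. g w = b}
        = measure_pmf.prob J {w. f w = a \<and> g w = b} * measure_pmf.prob J {w. g w = b \<and> h w = c})"

definition secure_protocol ::
  "('x \<times> 'y) pmf \<Rightarrow> ('x \<Rightarrow> 'y \<Rightarrow> 'z pmf) \<Rightarrow> ('x, 'y, 'z, 'e) protocol_scheme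
     \<Rightarrow> ('x \<Rightarrow> 'y \<Rightarrow> ('z \<times> hist \<times> hist \<times> hist) pmf) \<Rightarrow> bool" where
  "secure_protocol pXY W P D \<longleftrightarrow>
     valid_protocol P \<and>
     (\<forall>x y. (x, y) \<in> set_pmf pXY \<longrightarrow> protocol_dist P x y (D x y) \<and> map_pmf fst (D x y) = W x y) \<and>
     (let J = joint pXY D in
       markov_chain J (\<lambda>(x,y,z,m12,m23,m31). (m12, m31)) (\<lambda>(x,y,z,m12,m23,m31). x) (\<lambda>(x,y,z,m12,m23,m31). (y, z)) \<and>
       markov_chain J (\<lambda>(x,y,z,m12,m23,m31). (m12, m23)) (\<lambda>(x,y,z,m12,m23,m31). y) (\<lambda>(x,y,z,m12,m23,m31). (x, z)) \<and>
       markov_chain J (\<lambda>(x,y,z,m12,m23,m31). (m23, m31)) (\<lambda>(x,y,z,m12,m23,m31). z) (\<lambda>(x,y,z,m12,m23,m31). (x, y)))"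

text \<open>I(f;g) = 0 on the discrete distribution J, with the library's mutual information
  (KL divergence of the joint law from the product of marginals), additionally requiring that
  this KL divergence is a genuine (absolutely continuous, integrable) one, so that the value 0
  is not an artefact of the convention for non-integrable densities.\<close>
definition zero_mutual_information :: "'a pmf \<Rightarrow> ('a \<Rightarrow> 'b) \<Rightarrow> ('a \<Rightarrow> 'c) \<Rightarrow> bool" where
  "zero_mutual_information J f g \<longleftrightarrow>
     (let S = count_space UNIV; T = count_space UNIV;
          Pr = distr (measure_pmf J) S f \<Otimes>\<^sub>M distr (measure_pmf J) T g;
          Q = distr (measure_pmf J) (S \<Otimes>\<^sub>M T) (\<lambda>w. (f w, g w)) in
      absolutely_continuous Pr Q \<and> integrable Q (entropy_density 2 Pr Q) \<and>
      prob_space.mutual_information (measure_pmf J) 2 S T f g = 0)"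

definition char_graph_connected :: "('x \<times> 'y) pmf \<Rightarrow> bool" where
  "char_graph_connected pXY \<longleftrightarrow>
     (let E = {(Inl x, Inr y) | x y. pmf pXY (x, y) > 0} in
       \<forall>u v :: 'x + 'y. (u, v) \<in> (E \<union> E\<inverse>)\<^sup>*)"

definition full_support :: "('x \<times> 'y) pmf \<Rightarrow> bool" where
  "full_support pXY \<longleftrightarrow> (\<forall>x y. pmf pXY (x, y) > 0)"

definition no_X_partition :: "('x \<Rightarrow> 'y \<Rightarrow> 'z pmf) \<Rightarrow> bool" where
  "no_X_partition W \<longleftrightarrow> \<not> (\<exists>X1 X2. X1 \<union> X2 = UNIV \<and> X1 \<inter> X2 = {} \<and> X1 \<noteq> {} \<and> X2 \<noteq> {} \<and>
      {z. \<exists>x\<in>X1. \<exists>y. pmf (W x y) z > 0} \<inter> {z. \<exists>x\<in>X2. \<exists>y. pmf (W x y) z > 0} = {})"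

definition no_Y_partition :: "('x \<Rightarrow> 'y \<Rightarrow> 'z pmf) \<Rightarrow> bool" where
  "no_Y_partition W \<longleftrightarrow> \<not> (\<exists>Y1 Y2. Y1 \<union> Y2 = UNIV \<and> Y1 \<inter> Y2 = {} \<and> Y1 \<noteq> {} \<and> Y2 \<noteq> {} \<and>
      {z. \<exists>x. \<exists>y\<in>Y1. pmf (W x y) z > 0} \<inter> {z. \<exists>x. \<exists>y\<in>Y2. pmf (W x y) z > 0} = {})"

end

theory Submission
  imports Defs
begin

lemma prob_map_pmf: "measure_pmf.prob (map_pmf f p) A = measure_pmf.prob p (f -` A)"
  by (simp add: map_pmf_rep_eq measure_distr)

lemma prob_summable:
  fixes J :: "'a pmf" and f :: "'a \<Rightarrow> 'b"
  shows "Infinite_Set_Sum.abs_summable_on (\<lambda>u. measure_pmf.prob J {w. f w = u \<and> Q w}) A"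
proof -
  let ?K = "map_pmf (\<lambda>w. (f w, Q w)) J"
  have eq: "measure_pmf.prob J {w. f w = u \<and> Q w} = pmf ?K (u, True)" for u
    by (simp add: pmf_map vimage_def)
  have "Infinite_Set_Sum.abs_summable_on (pmf ?K) ((\<lambda>u. (u, True)) ` A)" by blast
  hence "Infinite_Set_Sum.abs_summable_on (\<lambda>u. pmf ?K (u, True)) A"
    using abs_summable_on_reindex_iff[of "\<lambda>u. (u, True)" A "pmf ?K"] by (auto simp: inj_on_def)
  thus ?thesis by (simp add: eq)
qed

lemma prob_sum:
  fixes J :: "'a pmf" and f :: "'a \<Rightarrow> 'b"
  shows "measure_pmf.prob J {w. f w \<in> A \<and> Q w} = infsetsum (\<lambda>u. measure_pmf.prob J {w. f w = u \<and> Q w}) A"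
proof -
  let ?K = "map_pmf (\<lambda>w. (f w, Q w)) J"
  have eq: "measure_pmf.prob J {w. f w = u \<and> Q w} = pmf ?K (u, True)" for u
    by (simp add: pmf_map vimage_def)
  have "measure_pmf.prob J {w. f w \<in> A \<and> Q w} = measure_pmf.prob ?K (A \<times> {True})"
    by (simp add: prob_map_pmf vimage_def)
  also have "\<dots> = infsetsum (pmf ?K) (A \<times> {True})"
    by (rule measure_pmf_conv_infsetsum)
  also have "\<dots> = infsetsum (\<lambda>u. pmf ?K (u, True)) A"
    by (rule infsetsum_reindex_bij_betw[symmetric]) (auto simp: bij_betw_def inj_on_def)
  finally show ?thesis by (simp add: eq)
qed

lemma mc_map:
  assumes "markov_chain J f g h"
  shows "markov_chain J (\<lambda>w. \<phi> (f w)) g h"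
  unfolding markov_chain_def
proof (intro allI)
  fix a b c
  let ?P = "measure_pmf.prob J"
  have mc: "?P {w. f w = u \<and> g w = b \<and> h w = c} * ?P {w. g w = b} =
            ?P {w. f w = u \<and> g w = b} * ?P {w. g w = b \<and> h w = c}" for u
    using assms unfolding markov_chain_def by blast
  have e1: "?P {w. \<phi> (f w) = a \<and> g w = b \<and> h w = c} = infsetsum (\<lambda>u. ?P {w. f w = u \<and> (g w = b \<and> h w = c)}) (\<phi> -` {a})"
    using prob_sum[of J f "\<phi> -` {a}" "\<lambda>w. g w = b \<and> h w = c"] by simp
  have e2: "?P {w. \<phi> (f w) = a \<and> g w = b} = infsetsum (\<lambda>u. ?P {w. f w = u \<and> g w = b}) (\<phi> -` {a})"
    using prob_sum[of J f "\<phi> -` {a}" "\<lambda>w. g w = b"] by simp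
  have "?P {w. \<phi> (f w) = a \<and> g w = b \<and> h w = c} * ?P {w. g w = b}
     = infsetsum (\<lambda>u. ?P {w. f w = u \<and> (g w = b \<and> h w = c)} * ?P {w. g w = b}) (\<phi> -` {a})"
    unfolding e1 by (rule infsetsum_cmult_left[symmetric]) (rule prob_summable)
  also have "\<dots> = infsetsum (\<lambda>u. ?P {w. f w = u \<and> g w = b} * ?P {w. g w = b \<and> h w = c}) (\<phi> -` {a})"
    using mc by simp
  also have "\<dots> = ?P {w. \<phi> (f w) = a \<and> g w = b} * ?P {w. g w = b \<and> h w = c}"
    unfolding e2 by (rule infsetsum_cmult_left) (rule prob_summable)
  finally show "?P {w. \<phi> (f w) = a \<and> g w = b \<and> h w = c} * ?P {w. g w = b}
     = ?P {w. \<phi> (f w) = a \<and> g w = b} * ?P {w. g w = b \<and> h w = c}" .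
qed

lemma zmi_from_indep:
  fixes J :: "'a pmf" and f :: "'a \<Rightarrow> 'b::countable" and g :: "'a \<Rightarrow> 'c::countable"
  assumes ind: "\<And>a b. measure_pmf.prob J {w. f w = a \<and> g w = b} = measure_pmf.prob J {w. f w = a} * measure_pmf.prob J {w. g w = b}"
  shows "zero_mutual_information J f g"
proof -
  have cs: "count_space (UNIV::'b set) \<Otimes>\<^sub>M count_space (UNIV::'c set) = count_space UNIV"
    by (simp add: pair_measure_countable)
  have eq: "distr (measure_pmf J) (count_space UNIV) f \<Otimes>\<^sub>M distr (measure_pmf J) (count_space UNIV) g
      = distr (measure_pmf J) (count_space UNIV \<Otimes>\<^sub>M count_space UNIV) (\<lambda>x. (f x, g x))"
  proof (rule measure_eqI_countable[where A=UNIV])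
    show "sets (distr (measure_pmf J) (count_space UNIV) f \<Otimes>\<^sub>M distr (measure_pmf J) (count_space UNIV) g) = Pow UNIV"
      using cs by (metis sets_count_space sets_pair_measure_cong sets_distr)
    show "sets (distr (measure_pmf J) (count_space UNIV \<Otimes>\<^sub>M count_space UNIV) (\<lambda>x. (f x, g x))) = Pow UNIV"
      using cs by simp
    show "countable (UNIV :: ('b \<times> 'c) set)" by simp
    fix ab :: "'b \<times> 'c"
    obtain a b where ab: "ab = (a, b)" by (cases ab)
    interpret X: prob_space "distr (measure_pmf J) (count_space UNIV) f"
      by (rule measure_pmf.prob_space_distr) simp
    interpret Y: prob_space "distr (measure_pmf J) (count_space UNIV) g"
      by (rule measure_pmf.prob_space_distr) simp
    interpret XY: pair_prob_space "distr (measure_pmf J) (count_space UNIV) f" "distr (measure_pmf J) (count_space UNIV) g" ..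
    have "emeasure (distr (measure_pmf J) (count_space UNIV) f \<Otimes>\<^sub>M distr (measure_pmf J) (count_space UNIV) g) ({a} \<times> {b})
        = emeasure (distr (measure_pmf J) (count_space UNIV) f) {a} * emeasure (distr (measure_pmf J) (count_space UNIV) g) {b}"
      by (rule Y.emeasure_pair_measure_Times) auto
    also have "\<dots> = ennreal (measure_pmf.prob J {w. f w = a}) * ennreal (measure_pmf.prob J {w. g w = b})"
      by (simp add: emeasure_distr measure_pmf.emeasure_eq_measure vimage_def)
    also have "\<dots> = ennreal (measure_pmf.prob J {w. f w = a \<and> g w = b})"
      by (simp add: ind ennreal_mult)
    also have "\<dots> = emeasure (distr (measure_pmf J) (count_space UNIV \<Otimes>\<^sub>M count_space UNIV) (\<lambda>x. (f x, g x))) {(a, b)}"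
      using cs by (simp add: emeasure_distr measure_pmf.emeasure_eq_measure vimage_def)
    finally show "emeasure (distr (measure_pmf J) (count_space UNIV) f \<Otimes>\<^sub>M distr (measure_pmf J) (count_space UNIV) g) {ab}
        = emeasure (distr (measure_pmf J) (count_space UNIV \<Otimes>\<^sub>M count_space UNIV) (\<lambda>x. (f x, g x))) {ab}"
      by (simp add: ab)
  qed
  define P where "P = distr (measure_pmf J) (count_space UNIV) f \<Otimes>\<^sub>M distr (measure_pmf J) (count_space UNIV) g"
  define Q where "Q = distr (measure_pmf J) (count_space UNIV \<Otimes>\<^sub>M count_space UNIV) (\<lambda>x. (f x, g x))"
  have QP: "Q = P" using eq by (simp add: P_def Q_def)
  interpret X: prob_space "distr (measure_pmf J) (count_space UNIV) f"
    by (rule measure_pmf.prob_space_distr) simp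
  interpret Y: prob_space "distr (measure_pmf J) (count_space UNIV) g"
    by (rule measure_pmf.prob_space_distr) simp
  interpret XY: pair_prob_space "distr (measure_pmf J) (count_space UNIV) f" "distr (measure_pmf J) (count_space UNIV) g" ..
  interpret PP: information_space P 2 unfolding P_def by standard simp
  have ac: "absolutely_continuous P Q" by (simp add: QP absolutely_continuous_def)
  have ed: "entropy_density 2 P Q \<in> borel_measurable P"
    by simp
  have "AE x in P. 1 = RN_deriv P Q x"
  proof (rule PP.RN_deriv_unique)
    show "density P (\<lambda>x. 1) = Q"
      unfolding QP by (intro measure_eqI) (auto simp: emeasure_density)
  qed auto
  then have ae_0: "AE x in P. entropy_density 2 P Q x = 0"
    by (auto simp: entropy_density_def)
  then have "integrable P (entropy_density 2 P Q) \<longleftrightarrow> integrable Q (\<lambda>x. 0::real)"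
    using ed unfolding QP by (intro integrable_cong_AE) auto
  then have int: "integrable Q (entropy_density 2 P Q)" by (simp add: QP)
  from ae_0 have "prob_space.mutual_information (measure_pmf J) 2 (count_space UNIV) (count_space UNIV) f g = (\<integral>x. 0 \<partial>P)"
    unfolding prob_space.mutual_information_def[OF measure_pmf.prob_space_axioms] KL_divergence_def P_def[symmetric] Q_def[symmetric] QP
    by (intro integral_cong_AE) auto
  then have mi: "prob_space.mutual_information (measure_pmf J) 2 (count_space UNIV) (count_space UNIV) f g = 0"
    by simp
  have "absolutely_continuous P Q \<and> integrable Q (entropy_density 2 P Q) \<and>
       prob_space.mutual_information (measure_pmf J) 2 (count_space UNIV) (count_space UNIV) f g = 0"
    using ac int mi by simp
  thus ?thesis unfolding zero_mutual_information_def Let_def P_def Q_def by simp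
qed


lemma finish:
  fixes J :: "'a pmf" and T :: "'a \<Rightarrow> 't::finite" and M :: "'a \<Rightarrow> 'm::countable"
  assumes c: "\<And>t m. measure_pmf.prob J {w. T w = t \<and> M w = m} = c m * measure_pmf.prob J {w. T w = t}"
  shows "zero_mutual_information J T M"
proof (rule zmi_from_indep)
  fix t m
  have "measure_pmf.prob J {w. M w = m} = measure_pmf.prob J {w. T w \<in> UNIV \<and> M w = m}" by simp
  also have "\<dots> = (\<Sum>u\<in>UNIV. measure_pmf.prob J {w. T w = u \<and> M w = m})"
    by (subst prob_sum) simp
  also have "\<dots> = c m * (\<Sum>u\<in>UNIV. measure_pmf.prob J {w. T w = u \<and> True})"
    by (simp add: c sum_distrib_left)
  also have "(\<Sum>u\<in>UNIV. measure_pmf.prob J {w. T w = u \<and> True}) = measure_pmf.prob J {w. T w \<in> UNIV \<and> True}"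
    by (subst prob_sum) simp
  also have "\<dots> = 1" by simp
  finally have "measure_pmf.prob J {w. M w = m} = c m" by simp
  thus "measure_pmf.prob J {w. T w = t \<and> M w = m} = measure_pmf.prob J {w. T w = t} * measure_pmf.prob J {w. M w = m}"
    by (simp add: c)
qed

lemma mc_swap:
  fixes h1 :: "'a \<Rightarrow> 'c" and h2 :: "'a \<Rightarrow> 'd"
  assumes "markov_chain J f g (\<lambda>w. (h1 w, h2 w))"
  shows "markov_chain J f g (\<lambda>w. (h2 w, h1 w))"
  unfolding markov_chain_def
proof (intro allI)
  fix a b and c :: "'d \<times> 'c"
  obtain c1 c2 where cc: "c = (c1, c2)" by (cases c)
  have "\<And>w. ((h2 w, h1 w) = c) = ((h1 w, h2 w) = (c2, c1))" using cc by auto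
  thus "measure_pmf.prob J {w. f w = a \<and> g w = b \<and> (h2 w, h1 w) = c} * measure_pmf.prob J {w. g w = b} =
        measure_pmf.prob J {w. f w = a \<and> g w = b} * measure_pmf.prob J {w. g w = b \<and> (h2 w, h1 w) = c}"
    using assms unfolding markov_chain_def by simp
qed

lemma key:
  fixes J :: "'a pmf"
  assumes mc: "markov_chain J M G (\<lambda>w. (H1 w, H2 w))"
    and S3: "S3 = {w. G w = g \<and> H1 w = h1 \<and> H2 w = h2}"
    and S4: "S4 = {w. G w = g \<and> H1 w = h1 \<and> H2 w = h2 \<and> M w = m}"
    and pos: "measure_pmf.prob J S3 > 0"
  shows "measure_pmf.prob J S4 = measure_pmf.prob J {w. M w = m \<and> G w = g} / measure_pmf.prob J {w. G w = g} * measure_pmf.prob J S3"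
proof -
  have e: "measure_pmf.prob J {w. M w = m \<and> G w = g \<and> (H1 w, H2 w) = (h1, h2)} * measure_pmf.prob J {w. G w = g}
     = measure_pmf.prob J {w. M w = m \<and> G w = g} * measure_pmf.prob J {w. G w = g \<and> (H1 w, H2 w) = (h1, h2)}"
    using mc unfolding markov_chain_def by blast
  have s4: "{w. M w = m \<and> G w = g \<and> (H1 w, H2 w) = (h1, h2)} = S4" using S4 by auto
  have s3: "{w. G w = g \<and> (H1 w, H2 w) = (h1, h2)} = S3" using S3 by auto
  have "S3 \<subseteq> {w. G w = g}" using S3 by auto
  hence "measure_pmf.prob J S3 \<le> measure_pmf.prob J {w. G w = g}"
    by (rule measure_pmf.finite_measure_mono) simp
  hence pg: "measure_pmf.prob J {w. G w = g} > 0" using pos by simp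
  from e[unfolded s4 s3] pg show ?thesis by (simp add: field_simps)
qed

lemma S4_le:
  assumes "measure_pmf.prob J {w. G w = g \<and> H1 w = h1 \<and> H2 w = h2} = 0"
  shows "measure_pmf.prob J {w. G w = g \<and> H1 w = h1 \<and> H2 w = h2 \<and> M w = m} = 0"
proof -
  have "measure_pmf.prob J {w. G w = g \<and> H1 w = h1 \<and> H2 w = h2 \<and> M w = m} \<le> measure_pmf.prob J {w. G w = g \<and> H1 w = h1 \<and> H2 w = h2}"
    by (rule measure_pmf.finite_measure_mono) auto
  with assms show ?thesis by (metis (no_types) antisym measure_nonneg)
qed


lemma core1:
  fixes J :: "'a pmf" and pXY :: "('x \<times> 'y) pmf"
  assumes mcA: "markov_chain J M X (\<lambda>w. (Y w, Z w))"
    and mcB: "markov_chain J M Y (\<lambda>w. (X w, Z w))"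
    and edge: "\<And>x y. pmf pXY (x,y) > 0 \<Longrightarrow> \<exists>z. measure_pmf.prob J {w. X w = x \<and> Y w = y \<and> Z w = z} > 0"
    and conn: "char_graph_connected pXY"
  shows "\<exists>c. \<forall>x y z m. measure_pmf.prob J {w. X w = x \<and> Y w = y \<and> Z w = z \<and> M w = m}
           = c m * measure_pmf.prob J {w. X w = x \<and> Y w = y \<and> Z w = z}"
proof -
  let ?P = "measure_pmf.prob J"
  define \<alpha> where "\<alpha> m x = ?P {w. M w = m \<and> X w = x} / ?P {w. X w = x}" for m x
  define \<beta> where "\<beta> m y = ?P {w. M w = m \<and> Y w = y} / ?P {w. Y w = y}" for m y
  have K: "?P {w. X w = x \<and> Y w = y \<and> Z w = z \<and> M w = m} = \<alpha> m x * ?P {w. X w = x \<and> Y w = y \<and> Z w = z} \<and>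
           ?P {w. X w = x \<and> Y w = y \<and> Z w = z \<and> M w = m} = \<beta> m y * ?P {w. X w = x \<and> Y w = y \<and> Z w = z}"
    if pos: "?P {w. X w = x \<and> Y w = y \<and> Z w = z} > 0" for x y z m
  proof
    show "?P {w. X w = x \<and> Y w = y \<and> Z w = z \<and> M w = m} = \<alpha> m x * ?P {w. X w = x \<and> Y w = y \<and> Z w = z}"
      unfolding \<alpha>_def by (rule key[OF mcA refl refl pos])
    have e3: "{w. X w = x \<and> Y w = y \<and> Z w = z} = {w. Y w = y \<and> X w = x \<and> Z w = z}" by auto
    have e4: "{w. X w = x \<and> Y w = y \<and> Z w = z \<and> M w = m} = {w. Y w = y \<and> X w = x \<and> Z w = z \<and> M w = m}" by auto
    show "?P {w. X w = x \<and> Y w = y \<and> Z w = z \<and> M w = m} = \<beta> m y * ?P {w. X w = x \<and> Y w = y \<and> Z w = z}"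
      unfolding \<beta>_def by (rule key[OF mcB e3 e4 pos])
  qed
  have ab: "\<alpha> m x = \<beta> m y" if xy: "pmf pXY (x, y) > 0" for m x y
  proof -
    obtain z where z: "?P {w. X w = x \<and> Y w = y \<and> Z w = z} > 0" using edge[OF xy] by blast
    from K[OF z, of m] z show ?thesis by (metis (no_types) mult_cancel_right order_less_irrefl)
  qed
  have all: "\<alpha> m x = \<alpha> m x'" for m x x'
  proof -
    define \<gamma> where "\<gamma> u = (case u of Inl x \<Rightarrow> \<alpha> m x | Inr y \<Rightarrow> \<beta> m y)" for u
    define E :: "(('x + 'y) \<times> ('x + 'y)) set" where "E = {(Inl x, Inr y) | x y. pmf pXY (x, y) > 0}"
    have path: "\<gamma> u = \<gamma> v" if "(u, v) \<in> (E \<union> E\<inverse>)\<^sup>*" for u v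
      using that
    proof (induction rule: rtrancl_induct)
      case base then show ?case by simp
    next
      case (step v w)
      from step.hyps(2) have "\<gamma> v = \<gamma> w"
      proof
        assume "(v, w) \<in> E"
        then obtain x y where "v = Inl x" "w = Inr y" "pmf pXY (x, y) > 0" unfolding E_def by blast
        thus ?thesis by (simp add: \<gamma>_def ab)
      next
        assume "(v, w) \<in> E\<inverse>"
        then obtain x y where "w = Inl x" "v = Inr y" "pmf pXY (x, y) > 0" unfolding E_def by blast
        thus ?thesis by (simp add: \<gamma>_def ab)
      qed
      with step.IH show ?case by simp
    qed
    have "\<forall>u v. (u, v) \<in> (E \<union> E\<inverse>)\<^sup>*"
      using conn unfolding char_graph_connected_def Let_def E_def .
    hence "(Inl x, Inl x') \<in> (E \<union> E\<inverse>)\<^sup>*" by blast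
    from path[OF this] show ?thesis by (simp add: \<gamma>_def)
  qed
  show ?thesis
  proof (intro exI allI)
    fix x y z m
    show "?P {w. X w = x \<and> Y w = y \<and> Z w = z \<and> M w = m} = \<alpha> m undefined * ?P {w. X w = x \<and> Y w = y \<and> Z w = z}"
    proof (cases "?P {w. X w = x \<and> Y w = y \<and> Z w = z} > 0")
      case True
      have "?P {w. X w = x \<and> Y w = y \<and> Z w = z \<and> M w = m} = \<alpha> m x * ?P {w. X w = x \<and> Y w = y \<and> Z w = z}"
        using K[OF True, of m] by blast
      moreover have "\<alpha> m x = \<alpha> m undefined" by (rule all)
      ultimately show ?thesis by simp
    next
      case False
      have "0 \<le> ?P {w. X w = x \<and> Y w = y \<and> Z w = z}" by (rule measure_nonneg)
      with False have "?P {w. X w = x \<and> Y w = y \<and> Z w = z} = 0" by linarith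
      with S4_le[OF this] show ?thesis by simp
    qed
  qed
qed


lemma core2:
  fixes J :: "'a pmf" and K :: "'p \<Rightarrow> 'q \<Rightarrow> 'z \<Rightarrow> real"
  assumes mcA: "markov_chain J M A (\<lambda>w. (B w, Z w))"
    and mcC: "markov_chain J M Z (\<lambda>w. (A w, B w))"
    and edge: "\<And>a b z. measure_pmf.prob J {w. A w = a \<and> B w = b \<and> Z w = z} > 0 \<longleftrightarrow> K a b z > 0"
    and nopart: "\<not> (\<exists>A1 A2. A1 \<union> A2 = UNIV \<and> A1 \<inter> A2 = {} \<and> A1 \<noteq> {} \<and> A2 \<noteq> {} \<and>
        {z. \<exists>a\<in>A1. \<exists>b. K a b z > 0} \<inter> {z. \<exists>a\<in>A2. \<exists>b. K a b z > 0} = {})"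
  shows "\<exists>c. \<forall>a b z m. measure_pmf.prob J {w. A w = a \<and> B w = b \<and> Z w = z \<and> M w = m}
           = c m * measure_pmf.prob J {w. A w = a \<and> B w = b \<and> Z w = z}"
proof -
  let ?P = "measure_pmf.prob J"
  define \<alpha> where "\<alpha> m a = ?P {w. M w = m \<and> A w = a} / ?P {w. A w = a}" for m a
  define \<gamma> where "\<gamma> m z = ?P {w. M w = m \<and> Z w = z} / ?P {w. Z w = z}" for m z
  have K1: "?P {w. A w = a \<and> B w = b \<and> Z w = z \<and> M w = m} = \<alpha> m a * ?P {w. A w = a \<and> B w = b \<and> Z w = z} \<and>
           ?P {w. A w = a \<and> B w = b \<and> Z w = z \<and> M w = m} = \<gamma> m z * ?P {w. A w = a \<and> B w = b \<and> Z w = z}"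
    if pos: "?P {w. A w = a \<and> B w = b \<and> Z w = z} > 0" for a b z m
  proof
    show "?P {w. A w = a \<and> B w = b \<and> Z w = z \<and> M w = m} = \<alpha> m a * ?P {w. A w = a \<and> B w = b \<and> Z w = z}"
      unfolding \<alpha>_def by (rule key[OF mcA refl refl pos])
    have e3: "{w. A w = a \<and> B w = b \<and> Z w = z} = {w. Z w = z \<and> A w = a \<and> B w = b}" by auto
    have e4: "{w. A w = a \<and> B w = b \<and> Z w = z \<and> M w = m} = {w. Z w = z \<and> A w = a \<and> B w = b \<and> M w = m}" by auto
    show "?P {w. A w = a \<and> B w = b \<and> Z w = z \<and> M w = m} = \<gamma> m z * ?P {w. A w = a \<and> B w = b \<and> Z w = z}"
      unfolding \<gamma>_def by (rule key[OF mcC e3 e4 pos])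
  qed
  have ag: "\<alpha> m a = \<gamma> m z" if kp: "K a b z > 0" for m a b z
  proof -
    have z: "?P {w. A w = a \<and> B w = b \<and> Z w = z} > 0" using edge kp by blast
    from K1[OF z, of m] z show ?thesis by (metis (no_types) mult_cancel_right order_less_irrefl)
  qed
  have all: "\<alpha> m a = \<alpha> m undefined" for m a
  proof (rule ccontr)
    assume ne: "\<alpha> m a \<noteq> \<alpha> m undefined"
    define A1 where "A1 = {a. \<alpha> m a = \<alpha> m undefined}"
    have "{z. \<exists>a\<in>A1. \<exists>b. K a b z > 0} \<inter> {z. \<exists>a\<in>- A1. \<exists>b. K a b z > 0} = {}"
    proof (rule ccontr)
      assume "{z. \<exists>a\<in>A1. \<exists>b. K a b z > 0} \<inter> {z. \<exists>a\<in>- A1. \<exists>b. K a b z > 0} \<noteq> {}"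
      then obtain z a1 b1 a2 b2 where "a1 \<in> A1" "K a1 b1 z > 0" "a2 \<notin> A1" "K a2 b2 z > 0" by blast
      with ag[of a1 b1 z m] ag[of a2 b2 z m] show False by (simp add: A1_def)
    qed
    moreover have "undefined \<in> A1" "a \<in> - A1" using ne by (auto simp: A1_def)
    ultimately have "\<exists>A1 A2. A1 \<union> A2 = UNIV \<and> A1 \<inter> A2 = {} \<and> A1 \<noteq> {} \<and> A2 \<noteq> {} \<and>
        {z. \<exists>a\<in>A1. \<exists>b. K a b z > 0} \<inter> {z. \<exists>a\<in>A2. \<exists>b. K a b z > 0} = {}"
      by (intro exI[of _ A1] exI[of _ "- A1"]) blast
    with nopart show False by (rule notE)
  qed
  show ?thesis
  proof (intro exI allI)
    fix a b z m
    show "?P {w. A w = a \<and> B w = b \<and> Z w = z \<and> M w = m} = \<alpha> m undefined * ?P {w. A w = a \<and> B w = b \<and> Z w = z}"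
    proof (cases "?P {w. A w = a \<and> B w = b \<and> Z w = z} > 0")
      case True
      have "?P {w. A w = a \<and> B w = b \<and> Z w = z \<and> M w = m} = \<alpha> m a * ?P {w. A w = a \<and> B w = b \<and> Z w = z}"
        using K1[OF True, of m] by blast
      moreover have "\<alpha> m a = \<alpha> m undefined" by (rule all)
      ultimately show ?thesis by simp
    next
      case False
      have "0 \<le> ?P {w. A w = a \<and> B w = b \<and> Z w = z}" by (rule measure_nonneg)
      with False have "?P {w. A w = a \<and> B w = b \<and> Z w = z} = 0" by linarith
      with S4_le[OF this] show ?thesis by simp
    qed
  qed
qed


lemma joint_prob:
  "measure_pmf.prob (joint pXY D) {w. fst w = x0 \<and> fst (snd w) = y0 \<and> R (snd (snd w))}
     = pmf pXY (x0, y0) * measure_pmf.prob (D x0 y0) {u. R u}"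
proof -
  let ?E = "{w. fst w = x0 \<and> fst (snd w) = y0 \<and> R (snd (snd w))}"
  have inner: "emeasure (measure_pmf ((\<lambda>(x, y). map_pmf (\<lambda>(z, m). (x, y, z, m)) (D x y)) p)) ?E
      = indicator {(x0, y0)} p * emeasure (measure_pmf (D x0 y0)) {u. R u}" for p
  proof (cases p)
    case (Pair a b)
    show ?thesis
    proof (cases "(a, b) = (x0, y0)")
      case True
      have "(\<lambda>(z, m). (x0, y0, z, m)) -` ?E = {u. R u}" by auto
      with True Pair show ?thesis by simp
    next
      case False
      have pre: "(\<lambda>(z, m). (a, b, z, m)) -` ?E = {}" using False by auto
      have "emeasure (measure_pmf (map_pmf (\<lambda>(z, m). (a, b, z, m)) (D a b))) ?E = 0"
        by (simp only: emeasure_map_pmf pre) simp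
      with False Pair show ?thesis by (simp del: emeasure_map_pmf)
    qed
  qed
  have "emeasure (measure_pmf (joint pXY D)) ?E = (\<integral>\<^sup>+p. indicator {(x0, y0)} p * emeasure (measure_pmf (D x0 y0)) {u. R u} \<partial>measure_pmf pXY)"
    unfolding joint_def emeasure_bind_pmf inner ..
  also have "\<dots> = emeasure (measure_pmf pXY) {(x0, y0)} * emeasure (measure_pmf (D x0 y0)) {u. R u}"
    by (subst nn_integral_multc) auto
  also have "\<dots> = ennreal (pmf pXY (x0, y0) * measure_pmf.prob (D x0 y0) {u. R u})"
    by (simp add: measure_pmf_single measure_pmf.emeasure_eq_measure ennreal_mult)
  finally show ?thesis
    by (simp add: measure_pmf.emeasure_eq_measure)
qed

lemma mc_cong:
  "markov_chain J f g h \<Longrightarrow> f = f' \<Longrightarrow> g = g' \<Longrightarrow> h = h' \<Longrightarrow> markov_chain J f' g' h'"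
  by simp

lemma sec_facts:
  fixes D :: "'x \<Rightarrow> 'y \<Rightarrow> ('z \<times> hist \<times> hist \<times> hist) pmf"
  assumes "secure_protocol pXY W P D"
  shows "\<And>x y. (x, y) \<in> set_pmf pXY \<Longrightarrow> map_pmf fst (D x y) = W x y"
    and "markov_chain (joint pXY D) (\<lambda>(x,y,z,m12,m23,m31). (m12, m31)) (\<lambda>(x,y,z,m12,m23,m31). x) (\<lambda>(x,y,z,m12,m23,m31). (y, z))"
    and "markov_chain (joint pXY D) (\<lambda>(x,y,z,m12,m23,m31). (m12, m23)) (\<lambda>(x,y,z,m12,m23,m31). y) (\<lambda>(x,y,z,m12,m23,m31). (x, z))"
    and "markov_chain (joint pXY D) (\<lambda>(x,y,z,m12,m23,m31). (m23, m31)) (\<lambda>(x,y,z,m12,m23,m31). z) (\<lambda>(x,y,z,m12,m23,m31). (x, y))"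
  using assms unfolding secure_protocol_def Let_def by auto

lemma finish6:
  fixes J :: "('x::finite \<times> 'y::finite \<times> 'z::finite \<times> hist \<times> hist \<times> hist) pmf" and M :: "_ \<Rightarrow> hist"
  assumes "\<forall>x y z m. measure_pmf.prob J {w. fst w = x \<and> fst (snd w) = y \<and> fst (snd (snd w)) = z \<and> M w = m}
     = c m * measure_pmf.prob J {w. fst w = x \<and> fst (snd w) = y \<and> fst (snd (snd w)) = z}"
  shows "zero_mutual_information J (\<lambda>(x,y,z,m12,m23,m31). (x, y, z)) M"
proof (rule finish)
  fix t :: "'x \<times> 'y \<times> 'z" and m
  obtain a b cc where t: "t = (a, b, cc)" by (cases t) auto
  have e1: "{w. (\<lambda>(x,y,z,m12,m23,m31). (x, y, z)) w = t \<and> M w = m} = {w. fst w = a \<and> fst (snd w) = b \<and> fst (snd (snd w)) = cc \<and> M w = m}"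
    by (auto simp: t split_beta)
  have e2: "{w. (\<lambda>(x,y,z,m12,m23,m31). (x, y, z)) w = t} = {w. fst w = a \<and> fst (snd w) = b \<and> fst (snd (snd w)) = cc}"
    by (auto simp: t split_beta)
  show "measure_pmf.prob J {w. (\<lambda>(x,y,z,m12,m23,m31). (x, y, z)) w = t \<and> M w = m} = c m * measure_pmf.prob J {w. (\<lambda>(x,y,z,m12,m23,m31). (x, y, z)) w = t}"
    unfolding e1 e2 using assms by blast
qed

lemma prob_xyz:
  "measure_pmf.prob (joint pXY D) {w. fst w = x \<and> fst (snd w) = y \<and> fst (snd (snd w)) = z} = pmf pXY (x, y) * pmf (map_pmf fst (D x y)) z"
  using joint_prob[of pXY D x y "\<lambda>u. fst u = z"] by (simp add: pmf_map vimage_def)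

lemma part1:
  fixes pXY :: "('x::finite \<times> 'y::finite) pmf" and W :: "'x \<Rightarrow> 'y \<Rightarrow> ('z::finite) pmf"
    and P :: "('x, 'y, 'z) protocol"
  assumes conn: "char_graph_connected pXY" and sec: "secure_protocol pXY W P D"
  shows "zero_mutual_information (joint pXY D) (\<lambda>(x,y,z,m12,m23,m31). (x, y, z)) (\<lambda>(x,y,z,m12,m23,m31). m12)"
proof -
  note F = sec_facts[OF sec]
  have mcA: "markov_chain (joint pXY D) (\<lambda>(x,y,z,m12,m23,m31). m12) fst (\<lambda>w. (fst (snd w), fst (snd (snd w))))"
    by (rule mc_cong[OF mc_map[OF F(2), of fst]]) (simp_all add: fun_eq_iff split_beta)
  have mcB: "markov_chain (joint pXY D) (\<lambda>(x,y,z,m12,m23,m31). m12) (\<lambda>w. fst (snd w)) (\<lambda>w. (fst w, fst (snd (snd w))))"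
    by (rule mc_cong[OF mc_map[OF F(3), of fst]]) (simp_all add: fun_eq_iff split_beta)
  have edge: "\<exists>z. measure_pmf.prob (joint pXY D) {w. fst w = x \<and> fst (snd w) = y \<and> fst (snd (snd w)) = z} > 0"
    if xy: "pmf pXY (x, y) > 0" for x y
  proof -
    obtain z where "z \<in> set_pmf (map_pmf fst (D x y))"
      by (metis all_not_in_conv set_pmf_not_empty)
    hence "pmf (map_pmf fst (D x y)) z > 0" by (simp add: pmf_positive)
    with xy show ?thesis by (intro exI[of _ z]) (simp add: prob_xyz)
  qed
  from core1[OF mcA mcB edge conn] obtain c where c:
    "\<forall>x y z m. measure_pmf.prob (joint pXY D) {w. fst w = x \<and> fst (snd w) = y \<and> fst (snd (snd w)) = z \<and> (\<lambda>(x,y,z,m12,m23,m31). m12) w = m}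
       = c m * measure_pmf.prob (joint pXY D) {w. fst w = x \<and> fst (snd w) = y \<and> fst (snd (snd w)) = z}"
    by blast
  show ?thesis by (rule finish6[OF c])
qed

lemma part2:
  fixes pXY :: "('x::finite \<times> 'y::finite) pmf" and W :: "'x \<Rightarrow> 'y \<Rightarrow> ('z::finite) pmf"
    and P :: "('x, 'y, 'z) protocol"
  assumes fs: "full_support pXY" and np: "no_X_partition W" and sec: "secure_protocol pXY W P D"
  shows "zero_mutual_information (joint pXY D) (\<lambda>(x,y,z,m12,m23,m31). (x, y, z)) (\<lambda>(x,y,z,m12,m23,m31). m31)"
proof -
  note F = sec_facts[OF sec]
  have mcA: "markov_chain (joint pXY D) (\<lambda>(x,y,z,m12,m23,m31). m31) fst (\<lambda>w. (fst (snd w), fst (snd (snd w))))"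
    by (rule mc_cong[OF mc_map[OF F(2), of snd]]) (simp_all add: fun_eq_iff split_beta)
  have mcC: "markov_chain (joint pXY D) (\<lambda>(x,y,z,m12,m23,m31). m31) (\<lambda>w. fst (snd (snd w))) (\<lambda>w. (fst w, fst (snd w)))"
    by (rule mc_cong[OF mc_map[OF F(4), of snd]]) (simp_all add: fun_eq_iff split_beta)
  have edge: "measure_pmf.prob (joint pXY D) {w. fst w = a \<and> fst (snd w) = b \<and> fst (snd (snd w)) = z} > 0
       \<longleftrightarrow> pmf (W a b) z > 0" for a b z
  proof -
    have p: "pmf pXY (a, b) > 0" using fs unfolding full_support_def by blast
    hence "(a, b) \<in> set_pmf pXY" by (simp add: set_pmf_iff)
    hence "map_pmf fst (D a b) = W a b" by (rule F(1))
    with p show ?thesis by (simp add: prob_xyz zero_less_mult_iff)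
  qed
  have nopart: "\<not> (\<exists>A1 A2. A1 \<union> A2 = UNIV \<and> A1 \<inter> A2 = {} \<and> A1 \<noteq> {} \<and> A2 \<noteq> {} \<and>
        {z. \<exists>a\<in>A1. \<exists>b. pmf (W a b) z > 0} \<inter> {z. \<exists>a\<in>A2. \<exists>b. pmf (W a b) z > 0} = {})"
    using np unfolding no_X_partition_def .
  from core2[OF mcA mcC edge nopart] obtain c where c:
    "\<forall>x y z m. measure_pmf.prob (joint pXY D) {w. fst w = x \<and> fst (snd w) = y \<and> fst (snd (snd w)) = z \<and> (\<lambda>(x,y,z,m12,m23,m31). m31) w = m}
       = c m * measure_pmf.prob (joint pXY D) {w. fst w = x \<and> fst (snd w) = y \<and> fst (snd (snd w)) = z}"
    by blast
  show ?thesis by (rule finish6[OF c])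
qed

lemma part3:
  fixes pXY :: "('x::finite \<times> 'y::finite) pmf" and W :: "'x \<Rightarrow> 'y \<Rightarrow> ('z::finite) pmf"
    and P :: "('x, 'y, 'z) protocol"
  assumes fs: "full_support pXY" and np: "no_Y_partition W" and sec: "secure_protocol pXY W P D"
  shows "zero_mutual_information (joint pXY D) (\<lambda>(x,y,z,m12,m23,m31). (x, y, z)) (\<lambda>(x,y,z,m12,m23,m31). m23)"
proof -
  note F = sec_facts[OF sec]
  have mcA: "markov_chain (joint pXY D) (\<lambda>(x,y,z,m12,m23,m31). m23) (\<lambda>w. fst (snd w)) (\<lambda>w. (fst w, fst (snd (snd w))))"
    by (rule mc_cong[OF mc_map[OF F(3), of snd]]) (simp_all add: fun_eq_iff split_beta)
  have mcC0: "markov_chain (joint pXY D) (\<lambda>(x,y,z,m12,m23,m31). m23) (\<lambda>w. fst (snd (snd w))) (\<lambda>w. (fst w, fst (snd w)))"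
    by (rule mc_cong[OF mc_map[OF F(4), of fst]]) (simp_all add: fun_eq_iff split_beta)
  have mcC: "markov_chain (joint pXY D) (\<lambda>(x,y,z,m12,m23,m31). m23) (\<lambda>w. fst (snd (snd w))) (\<lambda>w. (fst (snd w), fst w))"
    by (rule mc_swap[OF mcC0])
  have edge: "measure_pmf.prob (joint pXY D) {w. fst (snd w) = a \<and> fst w = b \<and> fst (snd (snd w)) = z} > 0
       \<longleftrightarrow> pmf (W b a) z > 0" for a b z
  proof -
    have p: "pmf pXY (b, a) > 0" using fs unfolding full_support_def by blast
    hence "(b, a) \<in> set_pmf pXY" by (simp add: set_pmf_iff)
    hence mp: "map_pmf fst (D b a) = W b a" by (rule F(1))
    have se: "{w. fst (snd w) = a \<and> fst w = b \<and> fst (snd (snd w)) = z} = {w. fst w = b \<and> fst (snd w) = a \<and> fst (snd (snd w)) = z}"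
      by auto
    have "measure_pmf.prob (joint pXY D) {w. fst (snd w) = a \<and> fst w = b \<and> fst (snd (snd w)) = z}
        = pmf pXY (b, a) * pmf (W b a) z"
      unfolding se prob_xyz mp ..
    thus ?thesis using p by (simp add: zero_less_mult_iff)
  qed
  have sw: "\<And>S. {z. \<exists>x. \<exists>y\<in>S. pmf (W x y) z > 0} = {z. \<exists>a\<in>S. \<exists>b. pmf (W b a) z > 0}" by blast
  have nopart: "\<not> (\<exists>A1 A2. A1 \<union> A2 = UNIV \<and> A1 \<inter> A2 = {} \<and> A1 \<noteq> {} \<and> A2 \<noteq> {} \<and>
        {z. \<exists>a\<in>A1. \<exists>b. pmf (W b a) z > 0} \<inter> {z. \<exists>a\<in>A2. \<exists>b. pmf (W b a) z > 0} = {})"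
    using np unfolding no_Y_partition_def sw .
  from core2[OF mcA mcC edge nopart] obtain c where c:
    "\<forall>a b z m. measure_pmf.prob (joint pXY D) {w. fst (snd w) = a \<and> fst w = b \<and> fst (snd (snd w)) = z \<and> (\<lambda>(x,y,z,m12,m23,m31). m23) w = m}
       = c m * measure_pmf.prob (joint pXY D) {w. fst (snd w) = a \<and> fst w = b \<and> fst (snd (snd w)) = z}"
    by blast
  have "\<forall>x y z m. measure_pmf.prob (joint pXY D) {w. fst w = x \<and> fst (snd w) = y \<and> fst (snd (snd w)) = z \<and> (\<lambda>(x,y,z,m12,m23,m31). m23) w = m}
       = c m * measure_pmf.prob (joint pXY D) {w. fst w = x \<and> fst (snd w) = y \<and> fst (snd (snd w)) = z}"
  proof (intro allI)
    fix x :: 'x and y :: 'y and z :: 'z and m :: hist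
    have e1: "{w. fst w = x \<and> fst (snd w) = y \<and> fst (snd (snd w)) = z \<and> (\<lambda>(x,y,z,m12,m23,m31). m23) w = m}
      = {w. fst (snd w) = y \<and> fst w = x \<and> fst (snd (snd w)) = z \<and> (\<lambda>(x,y,z,m12,m23,m31). m23) w = m}" by blast
    have e2: "{w. fst w = x \<and> fst (snd w) = y \<and> fst (snd (snd w)) = z}
      = {w. fst (snd w) = y \<and> fst w = x \<and> fst (snd (snd w)) = z}" by blast
    show "measure_pmf.prob (joint pXY D) {w. fst w = x \<and> fst (snd w) = y \<and> fst (snd (snd w)) = z \<and> (\<lambda>(x,y,z,m12,m23,m31). m23) w = m}
       = c m * measure_pmf.prob (joint pXY D) {w. fst w = x \<and> fst (snd w) = y \<and> fst (snd (snd w)) = z}"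
      unfolding e1 e2 using c by blast
  qed
  thus ?thesis by (rule finish6)
qed

theorem lemma3:
  fixes pXY :: "('x::finite \<times> 'y::finite) pmf"
    and W :: "'x \<Rightarrow> 'y \<Rightarrow> ('z::finite) pmf"
  shows
   "(char_graph_connected pXY \<longrightarrow>
       (\<forall>(P :: ('x, 'y, 'z) protocol) D. secure_protocol pXY W P D \<longrightarrow>
          zero_mutual_information (joint pXY D)
            (\<lambda>(x,y,z,m12,m23,m31). (x, y, z)) (\<lambda>(x,y,z,m12,m23,m31). m12))) \<and>
    (full_support pXY \<and> no_X_partition W \<longrightarrow>
       (\<forall>(P :: ('x, 'y, 'z) protocol) D. secure_protocol pXY W P D \<longrightarrow>
          zero_mutual_information (joint pXY D)
            (\<lambda>(x,y,z,m12,m23,m31). (x, y, z)) (\<lambda>(x,y,z,m12,m23,m31). m31))) \<and>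
    (full_support pXY \<and> no_Y_partition W \<longrightarrow>
       (\<forall>(P :: ('x, 'y, 'z) protocol) D. secure_protocol pXY W P D \<longrightarrow>
          zero_mutual_information (joint pXY D)
            (\<lambda>(x,y,z,m12,m23,m31). (x, y, z)) (\<lambda>(x,y,z,m12,m23,m31). m23)))"
  using part1[of pXY W] part2[of pXY W] part3[of pXY W] by blast

end
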